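(* Let $m>k>0$ and $n\ge1$ be integers with $\gcd(m,k)=1$. Then $$\frac{m^2n}{mnk+1}=[a_1,\dots,a_h]^-,$$ where the string $(a_1,\dots,a_h)$ is obtained from $(2,n+1,2)$ by a finite (possibly empty) sequence of operations, each of one of the following two types: (1) $(n_1,\dots,n_b)\mapsto(2,n_1,n_2,\dots,n_{b-1},n_b+1)$; (2) $(n_1,\dots,n_b)\mapsto(n_1+1,n_2,\dots,n_b,2)$.
   Context: For integers $b_i\ge2$, $$[b_1,\dots,b_k]^-=b_1-\cfrac{1}{b_2-\cfrac{1}{\ddots-\cfrac{1}{b_k}}}.$$ *)

theory Defs
  imports Complex_Main
begin

fun hjcf :: "int list \<Rightarrow> real" where
  "hjcf [] = 0"
| "hjcf [b] = of_int b"
| "hjcf (b # c # cs) = of_int b - 1 / hjcf (c # cs)"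

definition op1 :: "int list \<Rightarrow> int list" where
  "op1 xs = 2 # butlast xs @ [last xs + 1]"

definition op2 :: "int list \<Rightarrow> int list" where
  "op2 xs = (hd xs + 1) # tl xs @ [2]"

inductive reachable :: "int \<Rightarrow> int list \<Rightarrow> bool" for n :: int where
  base: "reachable n [2, n + 1, 2]"
| step1: "reachable n xs \<Longrightarrow> reachable n (op1 xs)"
| step2: "reachable n xs \<Longrightarrow> reachable n (op2 xs)"

end

theory Submission
  imports Defs
begin

fun mmul :: "int\<times>int\<times>int\<times>int \<Rightarrow> int\<times>int\<times>int\<times>int \<Rightarrow> int\<times>int\<times>int\<times>int" where
  "mmul (a,b,c,d) (e,f,g,h) = (a*e+b*g, a*f+b*h, c*e+d*g, c*f+d*h)"

definition Mx :: "int \<Rightarrow> int\<times>int\<times>int\<times>int" where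
  "Mx x = (x, -1, 1, 0)"

fun st :: "int list \<Rightarrow> int\<times>int\<times>int\<times>int" where
  "st [] = (1,0,0,1)"
| "st (x#xs) = mmul (Mx x) (st xs)"

lemma mmul_assoc: "mmul (mmul A B) C = mmul A (mmul B C)"
  by (cases A; cases B; cases C) (simp add: algebra_simps)

lemma mmul_id: "mmul A (1,0,0,1) = A"
  by (cases A) simp

lemma st_append: "st (xs @ ys) = mmul (st xs) (st ys)"
  by (induction xs) (simp_all add: mmul_assoc mmul_id[symmetric] , cases "st ys", simp)

lemma st_snoc: "st (xs @ [y]) = mmul (st xs) (Mx y)"
  using st_append[of xs "[y]"] by (simp add: Mx_def)

lemma hjcf_st:
  assumes "xs \<noteq> []" "\<forall>x\<in>set xs. x \<ge> 2"
  shows "fst (st xs) > fst (snd (snd (st xs))) \<and> fst (snd (snd (st xs))) > 0 \<and>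
         hjcf xs = real_of_int (fst (st xs)) / real_of_int (fst (snd (snd (st xs))))"
  using assms
proof (induction xs rule: hjcf.induct)
  case 1 then show ?case by simp
next
  case (2 b) then show ?case by (simp add: Mx_def)
next
  case (3 b c cs)
  obtain p p' q q' where e: "st (c#cs) = (p,p',q,q')" by (cases "st (c#cs)") auto
  from 3 e have ih: "p > q" "q > 0" "hjcf (c#cs) = real_of_int p / real_of_int q" by auto
  have b: "b \<ge> 2" using 3 by simp
  have "b * p - q > p" using ih b
  proof -
    have "2*p \<le> b*p" using b ih by (intro mult_right_mono) auto
    thus ?thesis using ih by linarith
  qed
  moreover have "st (b#c#cs) = (b*p - q, b*p' - q', p, p')"
    using e by (simp add: Mx_def)
  moreover have "hjcf (b#c#cs) = real_of_int (b*p - q) / real_of_int p"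
  proof -
    have i: "1 / hjcf (c#cs) = real_of_int q / real_of_int p" using ih by simp
    show ?thesis using ih by (simp only: hjcf.simps(3) i) (simp add: field_simps)
  qed
  ultimately show ?case using ih by simp
qed

lemma reach_ok: "reachable n xs \<Longrightarrow> n \<ge> 1 \<Longrightarrow> xs \<noteq> [] \<and> (\<forall>x\<in>set xs. x \<ge> 2)"
proof (induction rule: reachable.induct)
  case base then show ?case by simp
next
  case (step1 xs)
  then show ?case unfolding op1_def
    by (auto dest: in_set_butlastD) (smt (verit) last_in_set)
next
  case (step2 xs)
  then show ?case unfolding op2_def
    by (cases xs) auto
qed

definition T :: "int \<Rightarrow> int \<Rightarrow> int \<Rightarrow> int\<times>int\<times>int\<times>int" where
  "T n m k = (m^2*n, -(m*n*(m-k)+1), m*n*k+1, -(n*k*(m-k)+1))"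

lemma st_op2:
  assumes "xs \<noteq> []" "st xs = T n m k"
  shows "st (op2 xs) = T n (m+k) k"
proof -
  obtain h t where xs: "xs = h # t" using assms by (cases xs) auto
  obtain a b c d where e: "st t = (a,b,c,d)" by (cases "st t") auto
  have "op2 xs = ((h+1) # t) @ [2]" by (simp add: op2_def xs)
  hence "st (op2 xs) = mmul (mmul (Mx (h+1)) (a,b,c,d)) (Mx 2)"
    by (simp add: st_snoc e mmul_assoc)
  also have "\<dots> = T n (m+k) k"
  proof -
    have E: "(h*a - c, h*b - d, a, b) = T n m k" using assms(2) unfolding xs by (simp add: e Mx_def)
    have eq: "h*a - c = m^2*n" "h*b - d = -(m*n*(m-k)+1)" "a = m*n*k+1" "b = -(n*k*(m-k)+1)"
      using E unfolding T_def prod.inject by blast+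
    have c: "c = h*a - m^2*n" "d = h*b + (m*n*(m-k)+1)" using eq by auto
    show ?thesis by (simp add: c eq(3,4) Mx_def T_def power2_eq_square algebra_simps)
  qed
  finally show ?thesis .
qed

lemma st_op1:
  assumes "xs \<noteq> []" "st xs = T n m k"
  shows "st (op1 xs) = T n (2*m-k) m"
proof -
  obtain t h where xs: "xs = t @ [h]" using assms by (cases xs rule: rev_cases) auto
  obtain a b c d where e: "st t = (a,b,c,d)" by (cases "st t") auto
  have "op1 xs = 2 # (t @ [h+1])" by (simp add: op1_def xs)
  hence "st (op1 xs) = mmul (Mx 2) (mmul (a,b,c,d) (Mx (h+1)))"
    by (simp add: st_snoc e)
  also have "\<dots> = T n (2*m-k) m"
  proof -
    have E: "(a*h + b, -a, c*h + d, -c) = T n m k" using assms(2) unfolding xs by (simp add: st_snoc e Mx_def)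
    have eq: "a*h + b = m^2*n" "-a = -(m*n*(m-k)+1)" "c*h + d = m*n*k+1" "-c = -(n*k*(m-k)+1)"
      using E unfolding T_def prod.inject by blast+
    have c: "b = m^2*n - a*h" "d = m*n*k+1 - c*h" "a = m*n*(m-k)+1" "c = n*k*(m-k)+1" using eq by auto
    show ?thesis by (simp add: c Mx_def T_def power2_eq_square algebra_simps)
  qed
  finally show ?thesis .
qed

lemma gcd_aux: "gcd (k::int) (2*k-m) = gcd m k"
proof -
  have "gcd k (2*k-m) = gcd ((k-m)+k) k" by (simp add: gcd.commute algebra_simps)
  also have "\<dots> = gcd m k" by (simp only: gcd_add1 gcd_diff2)
  finally show ?thesis .
qed

lemma main:
  assumes "n \<ge> 1"
  shows "m > k \<Longrightarrow> k > 0 \<Longrightarrow> gcd m k = 1 \<Longrightarrow> \<exists>xs. reachable n xs \<and> st xs = T n m k"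
proof (induction "nat m" arbitrary: m k rule: less_induct)
  case less
  consider "m = 2*k" | "m > 2*k" | "m < 2*k" by linarith
  then show ?case
  proof cases
    case 1
    then have "gcd m k = k" using less(3) by simp
    with less have "k = 1" "m = 2" using 1 by auto
    then show ?thesis
      by (intro exI[of _ "[2, n+1, 2]"] conjI reachable.base) (simp add: Mx_def T_def algebra_simps)
  next
    case 2
    have g: "gcd (m-k) k = 1" using less(4) by (simp only: gcd_diff1)
    have lt: "nat (m-k) < nat m" using less(3) 2 by simp
    have "\<exists>xs. reachable n xs \<and> st xs = T n (m-k) k"
      using less(1)[OF lt] 2 less(3) g by simp
    then obtain xs where r: "reachable n xs" and s: "st xs = T n (m-k) k" by blast
    have "xs \<noteq> []" using reach_ok[OF r assms] by simp
    then have "st (op2 xs) = T n m k" using st_op2[of xs n "m-k" k] s by simp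
    then show ?thesis using reachable.step2[OF r] by blast
  next
    case 3
    have g: "gcd k (2*k-m) = 1" using less(4) by (simp only: gcd_aux)
    have lt: "nat k < nat m" using less(2,3) by simp
    have "\<exists>xs. reachable n xs \<and> st xs = T n k (2*k-m)"
      using less(1)[OF lt] 3 less(2,3) g by simp
    then obtain xs where r: "reachable n xs" and s: "st xs = T n k (2*k-m)" by blast
    have "xs \<noteq> []" using reach_ok[OF r assms] by simp
    then have "st (op1 xs) = T n m k" using st_op1[of xs n k "2*k-m"] s by simp
    then show ?thesis using reachable.step1[OF r] by blast
  qed
qed

theorem lemma3p3:
  fixes m k n :: int
  assumes "m > k" and "k > 0" and "n \<ge> 1" and "gcd m k = 1"
  shows "\<exists>as. reachable n as \<and>
           real_of_int (m^2 * n) / real_of_int (m * n * k + 1) = hjcf as"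
proof -
  obtain xs where r: "reachable n xs" and s: "st xs = T n m k"
    using main[OF assms(3) assms(1,2,4)] by auto
  have "hjcf xs = real_of_int (fst (st xs)) / real_of_int (fst (snd (snd (st xs))))"
    using hjcf_st reach_ok[OF r assms(3)] by blast
  with s r show ?thesis by (intro exI[of _ xs]) (simp add: T_def)
qed

end
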